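(* Let $X$ be an absolutely continuous nonnegative random variable with finite moment of order $m+s-1$, where $m\geq 1$ and $s\geq 2$ are integers. Then the $s$-iterated distribution induced by $X$ has a finite moment of order $m$, given by $$\mu_{s,m}=\binom{m+s-1}{m}^{-1}\frac{\mathbb{E}X^{m+s-1}}{\mathbb{E}X^{s-1}}.$$
   Context: Let $X$ be a nonnegative absolutely continuous random variable with density $f_X$. Set $\overline{T}_{X,0}(x)=f_X(x)$ and $\mu_{X,0}=1$. For each integer $s\geq 1$ define recursively $\overline{T}_{X,s}(x)=\frac{1}{\mu_{X,s-1}}\int_x^\infty \overline{T}_{X,s-1}(t)\,dt$ for $x\geq 0$, and $\mu_{X,s}=\int_0^\infty \overline{T}_{X,s}(t)\,dt$ (assuming these integrals are finite). The function $\overline{T}_{X,s}$ is the tail (survival function) of a distribution on $[0,\infty)$, called the $s$-iterated distribution induced by $X$; for $s\geq 1$ its density is $\overline{T}_{X,s-1}/\mu_{X,s-1}$. $\mu_{s,m}$ denotes the moment of order $m$ of the $s$-iterated distribution induced by $X$. *)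

theory Defs
  imports "HOL-Analysis.Analysis"
begin

primrec iter_tail :: "(real \<Rightarrow> real) \<Rightarrow> nat \<Rightarrow> real \<Rightarrow> real" where
  "iter_tail f 0 = f"
| "iter_tail f (Suc s) = (\<lambda>x. (LINT t:{x..}|lborel. iter_tail f s t) /
      (if s = 0 then 1 else (LINT t:{0..}|lborel. iter_tail f s t)))"

definition iter_mean :: "(real \<Rightarrow> real) \<Rightarrow> nat \<Rightarrow> real" where
  "iter_mean f s = (if s = 0 then 1 else (LINT t:{0..}|lborel. iter_tail f s t))"

definition iter_density :: "(real \<Rightarrow> real) \<Rightarrow> nat \<Rightarrow> real \<Rightarrow> real" where
  "iter_density f s x = iter_tail f (s - 1) x / iter_mean f (s - 1)"

definition iter_moment :: "(real \<Rightarrow> real) \<Rightarrow> nat \<Rightarrow> nat \<Rightarrow> real" where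
  "iter_moment f s m = (LINT x:{0..}|lborel. x ^ m * iter_density f s x)"

definition moment :: "(real \<Rightarrow> real) \<Rightarrow> nat \<Rightarrow> real" where
  "moment f k = (LINT x:{0..}|lborel. x ^ k * f x)"

end

theory Submission
  imports Defs
begin


lemma tail_has_integral:
  fixes a y :: real assumes "a \<le> y"
  shows "((\<lambda>t. (y - t) ^ j) has_integral ((y - a) ^ (j + 1) / (j + 1))) {a..y}"
proof -
  have "((\<lambda>t. (y - t) ^ j) has_integral ((\<lambda>t. (-1) * (y - t) ^ (j + 1) / (j + 1)) y - (\<lambda>t. (-1) * (y - t) ^ (j + 1) / (j + 1)) a)) {a..y}"
    apply (rule fundamental_theorem_of_calculus[OF assms])
    apply (subst has_real_derivative_iff_has_vector_derivative[symmetric])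
    apply (rule derivative_eq_intros refl | simp)+
    done
  then show ?thesis by simp
qed

lemma beta_has_integral:
  fixes y :: real assumes "0 \<le> y"
  shows "((\<lambda>x. x ^ m * (y - x) ^ j) has_integral
           (y ^ (m + j + 1) * fact m * fact j / fact (m + j + 1))) {0..y}"
  using assms
proof (induction m arbitrary: j)
  case 0
  show ?case using tail_has_integral[OF 0, of j]
    by (simp add: fact_Suc divide_simps)
next
  case (Suc m)
  let ?G = "\<lambda>x::real. (-1) * x ^ Suc m * (y - x) ^ (j + 1) / (j + 1)"
  let ?g = "\<lambda>x::real. x ^ Suc m * (y - x) ^ j - (Suc m / (j + 1)) * (x ^ m * (y - x) ^ (j + 1))"
  have d: "(?g has_integral (?G y - ?G 0)) {0..y}"
    apply (rule fundamental_theorem_of_calculus[OF Suc.prems])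
    apply (subst has_real_derivative_iff_has_vector_derivative[symmetric])
    apply (rule derivative_eq_intros refl | simp)+
    apply (simp add: field_simps)
    done
  have ih: "((\<lambda>x. (Suc m / (j + 1)) * (x ^ m * (y - x) ^ (j + 1))) has_integral
     (Suc m / (j + 1)) * (y ^ (m + (j+1) + 1) * fact m * fact (j+1) / fact (m + (j+1) + 1))) {0..y}"
    by (rule has_integral_mult_right[OF Suc.IH[OF Suc.prems]])
  have calc: "((\<lambda>x. ?g x + (Suc m / (j + 1)) * (x ^ m * (y - x) ^ (j + 1))) has_integral
      ((?G y - ?G 0) + (Suc m / (j + 1)) * (y ^ (m + (j+1) + 1) * fact m * fact (j+1) / fact (m + (j+1) + 1)))) {0..y}"
    by (rule has_integral_add[OF d ih])
  have eqv: "(?G y - ?G 0) + (Suc m / (j + 1)) * (y ^ (m + (j+1) + 1) * fact m * fact (j+1) / fact (m + (j+1) + 1))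
     = y ^ (Suc m + j + 1) * fact (Suc m) * fact j / fact (Suc m + j + 1)"
  proof -
    have e1: "m + (j+1) + 1 = Suc m + j + 1" by simp
    have e2: "?G y - ?G 0 = 0" by simp
    have e3: "fact (j+1) = (real j + 1) * fact j" "fact (Suc m) = (real m + 1) * fact m"
      by (simp_all add: fact_Suc)
    obtain F :: real where F: "fact (Suc m + j + 1) = F" by blast
    have "F > 0" using F[symmetric] by simp
    obtain Y :: real where Y: "y ^ (Suc m + j + 1) = Y" by blast
    show ?thesis unfolding e1 e2 e3 F Y by simp (simp add: add.commute)
  qed
  have eqf: "(\<lambda>x. ?g x + (Suc m / (j + 1)) * (x ^ m * (y - x) ^ (j + 1))) = (\<lambda>x. x ^ Suc m * (y - x) ^ j)"
    by simp
  show ?case using calc unfolding eqf eqv .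
qed

lemma pred_atLeast_real[measurable (raw)]:
  fixes f g :: "'a \<Rightarrow> real"
  assumes [measurable]: "f \<in> borel_measurable M" "g \<in> borel_measurable M"
  shows "Measurable.pred M (\<lambda>x. f x \<in> {g x..})"
  unfolding atLeast_iff by measurable

lemma pred_atLeastAtMost_real[measurable (raw)]:
  fixes f g h :: "'a \<Rightarrow> real"
  assumes [measurable]: "f \<in> borel_measurable M" "g \<in> borel_measurable M" "h \<in> borel_measurable M"
  shows "Measurable.pred M (\<lambda>x. f x \<in> {g x..h x})"
  unfolding atLeastAtMost_iff by measurable

definition Pn :: "(real \<Rightarrow> real) \<Rightarrow> nat \<Rightarrow> real \<Rightarrow> ennreal" where
  "Pn g j x = (\<integral>\<^sup>+y. ennreal (indicator {x..} y * (y - x) ^ j * g y) \<partial>lborel)"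

lemma Pn_meas[measurable]:
  assumes [measurable]: "g \<in> borel_measurable borel"
  shows "Pn g j \<in> borel_measurable borel"
  unfolding Pn_def by measurable

lemma tonelli_swap:
  assumes [measurable]: "g \<in> borel_measurable borel" "w \<in> borel_measurable borel"
    and g0: "\<And>y. 0 \<le> g y" and w0: "\<And>t. a \<le> t \<Longrightarrow> 0 \<le> w t"
  shows "(\<integral>\<^sup>+t. ennreal (indicator {a..} t * w t) * Pn g j t \<partial>lborel)
    = (\<integral>\<^sup>+y. ennreal (indicator {a..} y * g y) *
         (\<integral>\<^sup>+t. ennreal (indicator {a..y} t * w t * (y - t) ^ j) \<partial>lborel) \<partial>lborel)"
proof -
  have "(\<integral>\<^sup>+t. ennreal (indicator {a..} t * w t) * Pn g j t \<partial>lborel)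
     = (\<integral>\<^sup>+t. \<integral>\<^sup>+y. ennreal (indicator {a..} t * w t * indicator {t..} y * (y - t) ^ j * g y) \<partial>lborel \<partial>lborel)"
    unfolding Pn_def
    apply (rule nn_integral_cong)
    apply (subst nn_integral_cmult[symmetric])
     apply measurable
    apply (rule nn_integral_cong)
    using w0 g0 by (auto simp: indicator_def ennreal_mult[symmetric] mult_ac)
  also have "\<dots> = (\<integral>\<^sup>+y. \<integral>\<^sup>+t. ennreal (indicator {a..} t * w t * indicator {t..} y * (y - t) ^ j * g y) \<partial>lborel \<partial>lborel)"
    by (rule lborel_pair.Fubini'[symmetric]) measurable
  also have "\<dots> = (\<integral>\<^sup>+y. \<integral>\<^sup>+t. ennreal (indicator {a..} y * g y) *
         ennreal (indicator {a..y} t * w t * (y - t) ^ j) \<partial>lborel \<partial>lborel)"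
    apply (rule nn_integral_cong)+
    using w0 g0 by (auto simp: indicator_def ennreal_mult[symmetric] mult_ac)
  also have "\<dots> = (\<integral>\<^sup>+y. ennreal (indicator {a..} y * g y) *
         (\<integral>\<^sup>+t. ennreal (indicator {a..y} t * w t * (y - t) ^ j) \<partial>lborel) \<partial>lborel)"
    apply (rule nn_integral_cong)
    apply (rule nn_integral_cmult)
    by measurable
  finally show ?thesis .
qed

lemma tail_swap:
  assumes [measurable]: "g \<in> borel_measurable borel" and g0: "\<And>y. 0 \<le> g y"
  shows "(\<integral>\<^sup>+t. ennreal (indicator {x..} t) * Pn g j t \<partial>lborel) = ennreal (1 / Suc j) * Pn g (Suc j) x"
proof -
  have "(\<integral>\<^sup>+t. ennreal (indicator {x..} t) * Pn g j t \<partial>lborel)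
      = (\<integral>\<^sup>+t. ennreal (indicator {x..} t * (\<lambda>_. 1) t) * Pn g j t \<partial>lborel)" by simp
  also have "\<dots> = (\<integral>\<^sup>+y. ennreal (indicator {x..} y * g y) *
         (\<integral>\<^sup>+t. ennreal (indicator {x..y} t * (\<lambda>_. 1) t * (y - t) ^ j) \<partial>lborel) \<partial>lborel)"
    by (rule tonelli_swap) (auto simp: g0)
  also have "\<dots> = (\<integral>\<^sup>+y. ennreal (1 / Suc j) * ennreal (indicator {x..} y * (y - x) ^ Suc j * g y) \<partial>lborel)"
  proof (rule nn_integral_cong)
    fix y :: real
    show "ennreal (indicator {x..} y * g y) *
         (\<integral>\<^sup>+t. ennreal (indicator {x..y} t * (\<lambda>_. 1) t * (y - t) ^ j) \<partial>lborel)
       = ennreal (1 / Suc j) * ennreal (indicator {x..} y * (y - x) ^ Suc j * g y)"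
    proof (cases "x \<le> y")
      case True
      have "(\<integral>\<^sup>+t. ennreal (indicator {x..y} t * (y - t) ^ j) \<partial>lborel) = ennreal ((y - x) ^ (j + 1) / (j + 1))"
        by (rule nn_integral_has_integral_lebesgue[OF _ tail_has_integral[OF True]]) auto
      then have "ennreal (indicator {x..} y * g y) *
         (\<integral>\<^sup>+t. ennreal (indicator {x..y} t * (\<lambda>_. 1) t * (y - t) ^ j) \<partial>lborel)
          = ennreal (g y) * ennreal ((y - x) ^ (j + 1) / (j + 1))" using True by simp
      also have "\<dots> = ennreal (g y * ((y - x) ^ (j + 1) / (j + 1)))"
        by (rule ennreal_mult[symmetric]) (simp_all add: g0 True)
      also have "\<dots> = ennreal (1 / Suc j * (indicator {x..} y * (y - x) ^ Suc j * g y))"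
        using True by (simp add: indicator_def mult_ac)
      also have "\<dots> = ennreal (1 / Suc j) * ennreal (indicator {x..} y * (y - x) ^ Suc j * g y)"
        by (rule ennreal_mult) (simp_all add: g0 True)
      finally show ?thesis .
    qed (simp add: indicator_def)
  qed
  also have "\<dots> = ennreal (1 / Suc j) * Pn g (Suc j) x"
    unfolding Pn_def by (rule nn_integral_cmult) measurable
  finally show ?thesis .
qed

lemma moment_swap:
  assumes [measurable]: "g \<in> borel_measurable borel" and g0: "\<And>y. 0 \<le> g y"
  shows "(\<integral>\<^sup>+t. ennreal (indicator {0..} t * t ^ m) * Pn g j t \<partial>lborel)
     = ennreal (fact m * fact j / fact (m + j + 1)) * Pn g (m + j + 1) 0"
proof -
  have "(\<integral>\<^sup>+t. ennreal (indicator {0..} t * t ^ m) * Pn g j t \<partial>lborel)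
      = (\<integral>\<^sup>+y. ennreal (indicator {0..} y * g y) *
         (\<integral>\<^sup>+t. ennreal (indicator {0..y} t * t ^ m * (y - t) ^ j) \<partial>lborel) \<partial>lborel)"
    by (rule tonelli_swap) (auto simp: g0)
  also have "\<dots> = (\<integral>\<^sup>+y. ennreal (fact m * fact j / fact (m + j + 1)) * ennreal (indicator {0..} y * (y - 0) ^ (m + j + 1) * g y) \<partial>lborel)"
  proof (rule nn_integral_cong)
    fix y :: real
    show "ennreal (indicator {0..} y * g y) *
         (\<integral>\<^sup>+t. ennreal (indicator {0..y} t * t ^ m * (y - t) ^ j) \<partial>lborel)
       = ennreal (fact m * fact j / fact (m + j + 1)) * ennreal (indicator {0..} y * (y - 0) ^ (m + j + 1) * g y)"
    proof (cases "0 \<le> y")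
      case True
      have "(\<integral>\<^sup>+t. ennreal (indicator {0..y} t * (t ^ m * (y - t) ^ j)) \<partial>lborel)
          = ennreal (y ^ (m + j + 1) * fact m * fact j / fact (m + j + 1))"
        by (rule nn_integral_has_integral_lebesgue[OF _ beta_has_integral[OF True]]) auto
      then show ?thesis using True g0[of y]
        by (simp add: ennreal_mult[symmetric] indicator_def field_simps del: fact_Suc)
    qed (simp add: indicator_def)
  qed
  also have "\<dots> = ennreal (fact m * fact j / fact (m + j + 1)) * Pn g (m + j + 1) 0"
    unfolding Pn_def by (rule nn_integral_cmult) measurable
  finally show ?thesis .
qed

lemma pw_bound:
  fixes x y :: real
  assumes "0 \<le> x" "x \<le> y" "j \<le> n"
  shows "(y - x) ^ j \<le> 1 + y ^ n"
proof -
  have "(y - x) ^ j \<le> y ^ j" using assms by (intro power_mono) auto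
  also have "y ^ j \<le> 1 + y ^ n"
  proof (cases "y \<le> 1")
    case True
    then have "y ^ j \<le> 1" using assms by (intro power_le_one) auto
    moreover have "0 \<le> y ^ n" using assms by simp
    ultimately show ?thesis by linarith
  next
    case False
    then have "y ^ j \<le> y ^ n" using assms by (intro power_increasing) auto
    then show ?thesis by simp
  qed
  finally show ?thesis .
qed

lemma lint_as_nn:
  assumes "h \<in> borel_measurable borel" "\<And>t. t \<in> A \<Longrightarrow> 0 \<le> h t" "A \<in> sets borel"
  shows "(LINT t:A|lborel. h t) = enn2real (\<integral>\<^sup>+t. ennreal (indicator A t * h t) \<partial>lborel)"
  unfolding set_lebesgue_integral_def
  using assms by (subst integral_eq_nn_integral) (auto simp: indicator_def)



theorem proposition1:
  fixes f :: "real \<Rightarrow> real" and m s :: nat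
  assumes f_meas: "f \<in> borel_measurable borel"
    and f_nonneg: "\<And>x. 0 \<le> f x"
    and f_supp: "\<And>x. x < 0 \<Longrightarrow> f x = 0"
    and f_int: "integrable lborel f"
    and f_norm: "(LINT x|lborel. f x) = 1"
    and hm: "m \<ge> 1" and hs: "s \<ge> 2"
    and fin_mom: "set_integrable lborel {0..} (\<lambda>x. x ^ (m + s - 1) * f x)"
  shows "set_integrable lborel {0..} (\<lambda>x. x ^ m * iter_density f s x)
    \<and> iter_moment f s m
        = inverse (real ((m + s - 1) choose m)) * (moment f (m + s - 1) / moment f (s - 1))"
proof -
  note [measurable] = f_meas
  define n where "n = m + s - 1"
  define M where "M j = enn2real (Pn f j 0)" for j
  have If: "(\<integral>\<^sup>+y. ennreal (f y) \<partial>lborel) < \<infinity>"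
    using nn_integral_eq_integral[OF f_int] f_nonneg by simp
  have If1: "(\<integral>\<^sup>+y. ennreal (f y) \<partial>lborel) = 1"
    using nn_integral_eq_integral[OF f_int] f_nonneg f_norm by simp
  have In: "(\<integral>\<^sup>+y. ennreal (indicator {0..} y * y ^ n * f y) \<partial>lborel) < \<infinity>"
  proof -
    have "integrable lborel (\<lambda>x. indicator {0..} x *\<^sub>R (x ^ n * f x))"
      using fin_mom unfolding set_integrable_def n_def .
    from nn_integral_eq_integral[OF this]
    have "(\<integral>\<^sup>+y. ennreal (indicator {0..} y *\<^sub>R (y ^ n * f y)) \<partial>lborel) < \<infinity>"
      using f_nonneg by (simp add: indicator_def)
    then show ?thesis by (simp add: mult_ac)
  qed
  have fin: "Pn f j x < \<infinity>" if "j \<le> n" "0 \<le> x" for j x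
  proof -
    have "Pn f j x \<le> (\<integral>\<^sup>+y. ennreal (f y) + ennreal (indicator {0..} y * y ^ n * f y) \<partial>lborel)"
      unfolding Pn_def
    proof (rule nn_integral_mono)
      fix y :: real
      show "ennreal (indicator {x..} y * (y - x) ^ j * f y) \<le> ennreal (f y) + ennreal (indicator {0..} y * y ^ n * f y)"
      proof (cases "x \<le> y")
        case True
        have "(y - x) ^ j * f y \<le> (1 + y ^ n) * f y"
          using pw_bound[OF that(2) True that(1)] f_nonneg[of y] by (intro mult_right_mono) auto
        then show ?thesis using True that f_nonneg[of y]
          by (simp add: indicator_def ennreal_plus[symmetric] del: ennreal_plus) (simp add: algebra_simps)
      qed (simp add: indicator_def)
    qed
    also have "\<dots> = (\<integral>\<^sup>+y. ennreal (f y) \<partial>lborel) + (\<integral>\<^sup>+y. ennreal (indicator {0..} y * y ^ n * f y) \<partial>lborel)"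
      by (rule nn_integral_add) auto
    also have "\<dots> < \<infinity>" using If In by simp
    finally show ?thesis .
  qed
  have nz: "Pn f j 0 \<noteq> 0" for j
  proof
    assume "Pn f j 0 = 0"
    then have "AE y in lborel. ennreal (indicator {0..} y * (y - 0) ^ j * f y) = 0"
      unfolding Pn_def by (subst (asm) nn_integral_0_iff_AE) auto
    then have "AE y in lborel. f y = 0"
      using AE_lborel_singleton[of 0]
    proof eventually_elim
      case (elim y)
      show ?case
      proof (cases "y < 0")
        case True then show ?thesis by (rule f_supp)
      next
        case False
        with elim have "y > 0" by auto
        with elim have "y ^ j * f y \<le> 0" by (simp add: indicator_def ennreal_eq_0_iff)
        moreover have "y ^ j > 0" using \<open>y > 0\<close> by simp
        ultimately have "f y \<le> 0" by (simp add: mult_le_0_iff)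
        then show ?thesis using f_nonneg[of y] by simp
      qed
    qed
    then have "(LINT x|lborel. f x) = (LINT x::real|lborel. (0::real))"
      apply -
      apply (rule integral_cong_AE)
        apply measurable
      done
    with f_norm show False by simp
  qed
  have Mpos: "M j > 0" if "j \<le> n" for j
    unfolding M_def using fin[OF that, of 0] nz[of j] by (simp add: enn2real_positive_iff zero_less_iff_neq_zero)
  have M0: "M 0 = 1"
  proof -
    have "Pn f 0 0 = (\<integral>\<^sup>+y. ennreal (f y) \<partial>lborel)"
      unfolding Pn_def by (rule nn_integral_cong) (auto simp: indicator_def f_supp)
    then show ?thesis using If1 by (simp add: M_def)
  qed
  have Mmom: "moment f k = M k" for k
    unfolding moment_def M_def Pn_def
    by (subst lint_as_nn) (auto simp: f_nonneg mult_ac)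
  have L_tail: "(LINT t:{x..}|lborel. h t) = enn2real (Pn f (Suc j) x) / (c * Suc j)"
    if "j < n" "0 \<le> x" "0 < c" "\<And>t. x \<le> t \<Longrightarrow> h t = enn2real (Pn f j t) / c" for j x c h
  proof -
    have "(LINT t:{x..}|lborel. h t) = (LINT t:{x..}|lborel. enn2real (Pn f j t) / c)"
      by (rule set_lebesgue_integral_cong) (auto simp: that(4))
    also have "\<dots> = enn2real (\<integral>\<^sup>+t. ennreal (indicator {x..} t * (enn2real (Pn f j t) / c)) \<partial>lborel)"
      by (rule lint_as_nn) (use that in auto)
    also have "(\<integral>\<^sup>+t. ennreal (indicator {x..} t * (enn2real (Pn f j t) / c)) \<partial>lborel)
        = (\<integral>\<^sup>+t. ennreal (1 / c) * (ennreal (indicator {x..} t) * Pn f j t) \<partial>lborel)"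
    proof (rule nn_integral_cong)
      fix t :: real
      show "ennreal (indicator {x..} t * (enn2real (Pn f j t) / c)) = ennreal (1 / c) * (ennreal (indicator {x..} t) * Pn f j t)"
      proof (cases "x \<le> t")
        case True
        have "Pn f j t < \<infinity>" using fin[of j t] that True by simp
        then have "ennreal (enn2real (Pn f j t) / c) = ennreal (1 / c) * ennreal (enn2real (Pn f j t))"
        proof -
          have "enn2real (Pn f j t) / c = (1 / c) * enn2real (Pn f j t)" by simp
          also have "ennreal \<dots> = ennreal (1 / c) * ennreal (enn2real (Pn f j t))"
            by (rule ennreal_mult) (use that in auto)
          finally show ?thesis .
        qed
        then show ?thesis using True \<open>Pn f j t < \<infinity>\<close> by (simp add: indicator_def)
      qed (simp add: indicator_def)
    qed
    also have "\<dots> = ennreal (1 / c) * (\<integral>\<^sup>+t. ennreal (indicator {x..} t) * Pn f j t \<partial>lborel)"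
      by (rule nn_integral_cmult) measurable
    also have "\<dots> = ennreal (1 / c) * (ennreal (1 / Suc j) * Pn f (Suc j) x)"
      by (subst tail_swap) (auto simp: f_nonneg)
    finally show ?thesis
      using that by (simp add: enn2real_mult)
  qed
  have T: "\<forall>x\<ge>0. iter_tail f (Suc j) x = enn2real (Pn f j x) / M j" if "j < n" for j
    using that
  proof (induction j)
    case 0
    show ?case
    proof (intro allI impI)
      fix x :: real assume "0 \<le> x"
      have "(LINT t:{x..}|lborel. f t) = enn2real (Pn f 0 x)"
        unfolding Pn_def by (subst lint_as_nn) (auto simp: f_nonneg)
      then show "iter_tail f (Suc 0) x = enn2real (Pn f 0 x) / M 0" by (simp add: M0)
    qed
  next
    case (Suc j)
    then have jn: "j < n" by simp
    have MjP: "M j > 0" "M (Suc j) > 0" using Mpos Suc.prems by auto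
    show ?case
    proof (intro allI impI)
      fix x :: real assume "0 \<le> x"
      have num: "(LINT t:{x..}|lborel. iter_tail f (Suc j) t) = enn2real (Pn f (Suc j) x) / (M j * Suc j)"
        by (rule L_tail[OF jn \<open>0 \<le> x\<close> MjP(1)]) (use Suc.IH[OF jn] \<open>0 \<le> x\<close> in auto)
      have "(LINT t:{0..}|lborel. iter_tail f (Suc j) t) = enn2real (Pn f (Suc j) 0) / (M j * Suc j)"
        by (rule L_tail[OF jn _ MjP(1)]) (use Suc.IH[OF jn] in auto)
      then have den: "(LINT t:{0..}|lborel. iter_tail f (Suc j) t) = M (Suc j) / (M j * Suc j)"
        by (simp only: M_def)
      have "iter_tail f (Suc (Suc j)) x = (LINT t:{x..}|lborel. iter_tail f (Suc j) t) / (LINT t:{0..}|lborel. iter_tail f (Suc j) t)"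
        by (simp only: iter_tail.simps(2)[of f "Suc j"] nat.distinct if_False)
      also have "\<dots> = enn2real (Pn f (Suc j) x) / M (Suc j)"
        unfolding num den using MjP by (simp del: of_nat_Suc)
      finally show "iter_tail f (Suc (Suc j)) x = enn2real (Pn f (Suc j) x) / M (Suc j)" .
    qed
  qed
  have mean: "iter_mean f (Suc j) = M (Suc j) / (M j * Suc j)" if "j < n" for j
  proof -
    have "(LINT t:{0..}|lborel. iter_tail f (Suc j) t) = enn2real (Pn f (Suc j) 0) / (M j * Suc j)"
      by (rule L_tail[OF that _ Mpos]) (use T[OF that] that in auto)
    then show ?thesis unfolding iter_mean_def by (simp only: M_def) simp
  qed
  define j0 where "j0 = s - 2"
  have s_eq: "s = Suc (Suc j0)" using hs unfolding j0_def by simp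
  have n_eq: "n = m + j0 + 1" using s_eq hm unfolding n_def by simp
  have j0n: "j0 < n" "Suc j0 \<le> n" using n_eq hm by auto
  define K where "K = real (Suc j0) / M (Suc j0)"
  have Kpos: "K > 0" unfolding K_def using Mpos[OF j0n(2)] by simp
  have Mj0: "M j0 > 0" using Mpos j0n by simp
  have D: "iter_density f s x = enn2real (Pn f j0 x) * K" if "0 \<le> x" for x
  proof -
    have "iter_density f s x = (enn2real (Pn f j0 x) / M j0) / (M (Suc j0) / (M j0 * Suc j0))"
      unfolding iter_density_def using T[OF j0n(1)] mean[OF j0n(1)] that by (simp add: s_eq del: of_nat_Suc)
    also have "\<dots> = enn2real (Pn f j0 x) * K"
      unfolding K_def using Mj0 Mpos[OF j0n(2)] by (simp add: field_simps del: of_nat_Suc)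
    finally show ?thesis .
  qed
  define H where "H x = indicator {0..} x * x ^ m * enn2real (Pn f j0 x) * K" for x
  have Hmeas[measurable]: "H \<in> borel_measurable borel" unfolding H_def by measurable
  have Heq: "(\<lambda>x. indicator {0..} x *\<^sub>R (x ^ m * iter_density f s x)) = H"
  proof
    fix x :: real
    show "indicator {0..} x *\<^sub>R (x ^ m * iter_density f s x) = H x"
      by (cases "0 \<le> x") (auto simp: H_def D indicator_def)
  qed
  have H0: "0 \<le> H x" for x unfolding H_def using Kpos by (auto simp: indicator_def)
  have HN: "(\<integral>\<^sup>+x. ennreal (H x) \<partial>lborel) = ennreal K * (ennreal (fact m * fact j0 / fact n) * Pn f n 0)"
  proof -
    have "(\<integral>\<^sup>+x. ennreal (H x) \<partial>lborel) = (\<integral>\<^sup>+x. ennreal K * (ennreal (indicator {0..} x * x ^ m) * Pn f j0 x) \<partial>lborel)"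
    proof (rule nn_integral_cong)
      fix x :: real
      show "ennreal (H x) = ennreal K * (ennreal (indicator {0..} x * x ^ m) * Pn f j0 x)"
      proof (cases "0 \<le> x")
        case True
        have fx: "Pn f j0 x < \<infinity>" using fin[OF _ True, of j0] j0n by simp
        have "ennreal (H x) = ennreal (K * (x ^ m * enn2real (Pn f j0 x)))"
          unfolding H_def using True by (simp add: mult_ac)
        also have "\<dots> = ennreal K * (ennreal (x ^ m) * ennreal (enn2real (Pn f j0 x)))"
          using Kpos True by (simp add: ennreal_mult)
        finally show ?thesis using True fx by simp
      qed (simp add: H_def)
    qed
    also have "\<dots> = ennreal K * (\<integral>\<^sup>+x. ennreal (indicator {0..} x * x ^ m) * Pn f j0 x \<partial>lborel)"
      by (rule nn_integral_cmult) measurable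
    also have "\<dots> = ennreal K * (ennreal (fact m * fact j0 / fact (m + j0 + 1)) * Pn f (m + j0 + 1) 0)"
      by (subst moment_swap) (auto simp: f_nonneg)
    finally show ?thesis unfolding n_eq .
  qed
  have HNfin: "(\<integral>\<^sup>+x. ennreal (H x) \<partial>lborel) < \<infinity>"
    unfolding HN using fin[of n 0] by (simp add: ennreal_mult_less_top)
  have Hint: "integrable lborel H"
    by (rule integrableI_nonneg) (use H0 HNfin in auto)
  have part1: "set_integrable lborel {0..} (\<lambda>x. x ^ m * iter_density f s x)"
    unfolding set_integrable_def Heq by (rule Hint)
  have "iter_moment f s m = integral\<^sup>L lborel H"
    unfolding iter_moment_def set_lebesgue_integral_def Heq ..
  also have "\<dots> = enn2real (\<integral>\<^sup>+x. ennreal (H x) \<partial>lborel)"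
    by (rule integral_eq_nn_integral) (use H0 in auto)
  also have "\<dots> = K * (fact m * fact j0 / fact n) * M n"
    unfolding HN M_def using Kpos by (simp add: enn2real_mult)
  also have "\<dots> = inverse (real ((m + s - 1) choose m)) * (moment f (m + s - 1) / moment f (s - 1))"
  proof -
    have nm: "n - m = Suc j0" using n_eq by simp
    have b: "real (n choose m) = fact n / (fact m * fact (Suc j0))"
      using binomial_fact[of m n] n_eq nm by simp
    have mm: "moment f (m + s - 1) = M n" "moment f (s - 1) = M (Suc j0)"
      using Mmom n_def s_eq by auto
    have nn: "m + s - 1 = n" using n_def by simp
    have e: "(fact (Suc j0) :: real) = real (Suc j0) * fact j0" by (simp only: fact_Suc)
    show ?thesis
      unfolding K_def mm nn b e using Mpos[OF j0n(2)] by (simp add: field_simps Mmom del: of_nat_Suc)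
  qed
  finally show ?thesis using part1 by simp
qed

end
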